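(* For any real numbers $\theta>0$, $\epsilon\in(0,1)$ and $q\geq 1$, there exists $c>0$ depending only on $\theta,\epsilon,q$ such that the following holds. For any positive integer $r\leq \frac{c\log n}{\log\log n}$, if the number of items satisfies $m\in[rn+n^\epsilon,(r+1)n-n^\epsilon]$ and the utilities $u_i(j)$ ($i\in[n]$, $j\in[m]$) are drawn independently from a distribution $\mathcal{U}$ on $[0,1]$ that is $(\theta,q)$-polynomially bounded below at 1, then with high probability there is no envy-free allocation of the $m$ items among the $n$ agents.
   Context: There is a set $N=[n]$ of agents and a set $M=[m]$ of indivisible items. Agent $i$ has utility $u_i(j)\in[0,1]$ for item $j$, and utilities are additive: $u_i(M')=\sum_{j\in M'}u_i(j)$. An allocation is a partition $(M_1,\dots,M_n)$ of $M$, with $M_i$ given to agent $i$; it is envy-free if $u_i(M_i)\geq u_i(M_{i'})$ for all $i,i'\in N$. A distribution $\mathcal{U}$ on $[0,1]$ is $(\theta,q)$-polynomially bounded below at 1 if for every $\alpha\in(0,1]$, $\Pr_{u\sim\mathcal{U}}[u>1-\alpha]\geq\theta\alpha^q$. "With high probability" means with probability tending to 1 as $n\to\infty$; $\log$ is the natural logarithm. *)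

theory Defs
  imports "HOL-Probability.Probability"
begin

text \<open>Utilities are a function u on pairs (agent i, item j), u (i,j) = u_i(j). An allocation maps each item j<m to an agent a j < n;
  agent i receives the bundle {j<m. a j = i}.\<close>

definition envy_free :: "nat \<Rightarrow> nat \<Rightarrow> (nat \<times> nat \<Rightarrow> real) \<Rightarrow> (nat \<Rightarrow> nat) \<Rightarrow> bool" where
  "envy_free n m u a \<longleftrightarrow>
     (\<forall>j<m. a j < n) \<and>
     (\<forall>i<n. \<forall>i'<n. (\<Sum>j\<in>{j. j < m \<and> a j = i'}. u (i, j)) \<le> (\<Sum>j\<in>{j. j < m \<and> a j = i}. u (i, j)))"

definition poly_bounded_below_at_1 :: "real \<Rightarrow> real \<Rightarrow> real measure \<Rightarrow> bool" where
  "poly_bounded_below_at_1 \<theta> q U \<longleftrightarrow>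
     (\<forall>\<alpha>::real. 0 < \<alpha> \<and> \<alpha> \<le> 1 \<longrightarrow> \<theta> * \<alpha> powr q \<le> measure U {x. x > 1 - \<alpha>})"

definition util_space :: "real measure \<Rightarrow> nat \<Rightarrow> nat \<Rightarrow> (nat \<times> nat \<Rightarrow> real) measure" where
  "util_space U n m = PiM ({..<n} \<times> {..<m}) (\<lambda>_. U)"

end

theory Submission
  imports Defs "HOL-Real_Asymp.Real_Asymp"
begin


lemma indep_coords:
  assumes U: "prob_space U" and I: "I \<noteq> {}" "finite I"
  shows "prob_space.indep_vars (PiM I (\<lambda>_. U)) (\<lambda>_. U) (\<lambda>x \<omega>. \<omega> x) I"
proof -
  interpret product_prob_space "\<lambda>_. U" I
    by (simp add: product_prob_space_def product_prob_space_axioms_def product_sigma_finite_def U prob_space_imp_sigma_finite)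
  show ?thesis
  proof (subst P.indep_vars_iff_distr_eq_PiM'[OF I(1)])
    show "random_variable U (\<lambda>\<omega>. \<omega> i)" if "i \<in> I" for i
      using that by simp
    have "distr (PiM I (\<lambda>_. U)) (PiM I (\<lambda>_. U)) (\<lambda>x. \<lambda>i\<in>I. x i) = PiM I (\<lambda>_. U)"
      using distr_restrict[of I I] I by simp
    also have "\<dots> = (\<Pi>\<^sub>M i\<in>I. distr (PiM I (\<lambda>_. U)) U (\<lambda>\<omega>. \<omega> i))"
      by (intro PiM_cong refl) (simp add: PiM_component)
    finally show "distr (PiM I (\<lambda>_. U)) (PiM I (\<lambda>_. U)) (\<lambda>x. \<lambda>i\<in>I. x i) = (\<Pi>\<^sub>M i\<in>I. distr (PiM I (\<lambda>_. U)) U (\<lambda>\<omega>. \<omega> i))" .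
  qed
qed



lemma prob_core:
  fixes U :: "real measure" and G :: "real set" and Lset :: "nat set" and SS :: "nat set set"
  assumes U: "prob_space U" and G: "G \<in> sets U" and d: "d \<ge> 1"
    and L: "Lset \<subseteq> {..<n}" and fS: "finite SS" and Ssub: "\<And>S. S\<in>SS \<Longrightarrow> S \<subseteq> {..<m} \<and> card S = d"
    and disj: "\<And>S S'. S\<in>SS \<Longrightarrow> S'\<in>SS \<Longrightarrow> S \<noteq> S' \<Longrightarrow> S \<inter> S' = {}"
  shows "measure (PiM ({..<n}\<times>{..<m}) (\<lambda>_. U))
     {u \<in> space (PiM ({..<n}\<times>{..<m}) (\<lambda>_. U)). \<forall>i\<in>Lset. \<forall>S\<in>SS. \<exists>j\<in>S. u (i,j) \<notin> G}
     = (1 - measure U G ^ d) ^ (card Lset * card SS)"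
proof -
  define I where "I = {..<n}\<times>{..<m}"
  interpret product_prob_space "\<lambda>_. U" I
    by (simp add: product_prob_space_def product_prob_space_axioms_def product_sigma_finite_def U prob_space_imp_sigma_finite)
  have finL: "finite Lset" using L finite_subset by blast
  define J where "J = Lset \<times> SS"
  have cardJ: "card J = card Lset * card SS" unfolding J_def by (simp add: card_cartesian_product)
  show ?thesis
  proof (cases "J = {}")
    case True
    then have "card Lset * card SS = 0" using cardJ by simp
    moreover have "{u \<in> space (PiM I (\<lambda>_. U)). \<forall>i\<in>Lset. \<forall>S\<in>SS. \<exists>j\<in>S. u (i,j) \<notin> G} = space (PiM I (\<lambda>_. U))"
      using True unfolding J_def by auto
    ultimately show ?thesis unfolding I_def[symmetric] by (auto simp: P.prob_space)
  next
    case False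
    then obtain i0 S0 where i0: "i0 \<in> Lset" and S0: "S0 \<in> SS" unfolding J_def by auto
    have "card S0 \<ge> 1" using Ssub[OF S0] d by simp
    then obtain j0 where "j0 \<in> S0" by (metis card.empty card_gt_0_iff equals0I less_one not_le)
    then have "(i0, j0) \<in> I" using i0 S0 L Ssub unfolding I_def by auto
    then have Ine: "I \<noteq> {}" by auto
    have finI: "finite I" unfolding I_def by simp
    define K where "K = (\<lambda>(i::nat, S::nat set). {i} \<times> S)"
    have KI: "K k \<subseteq> I" if "k \<in> J" for k
      using that L Ssub unfolding K_def J_def I_def by (auto split: prod.splits)
    have dj: "disjoint_family_on K J"
      unfolding disjoint_family_on_def K_def J_def using disj by auto
    have ind: "P.indep_vars (\<lambda>k. PiM (K k) (\<lambda>_. U)) (\<lambda>k \<omega>. restrict (\<lambda>x. \<omega> x) (K k)) J"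
      by (rule P.indep_vars_restrict[OF indep_coords[OF U Ine finI] KI dj])
    define A where "A k = {\<omega> \<in> space (PiM I (\<lambda>_. U)). \<exists>x\<in>K k. \<omega> x \<notin> G}" for k
    have Ain: "A k \<in> {(\<lambda>\<omega>. restrict (\<lambda>x. \<omega> x) (K k)) -` B \<inter> space (PiM I (\<lambda>_. U)) | B. B \<in> sets (PiM (K k) (\<lambda>_. U))}"
      if "k \<in> J" for k
    proof -
      let ?B = "space (PiM (K k) (\<lambda>_. U)) - PiE (K k) (\<lambda>_. G)"
      have "?B \<in> sets (PiM (K k) (\<lambda>_. U))"
        using G by (intro sets.Diff sets.top sets_PiM_I_finite) (auto intro: finite_subset[OF KI[OF that] finI])
      moreover have "A k = (\<lambda>\<omega>. restrict (\<lambda>x. \<omega> x) (K k)) -` ?B \<inter> space (PiM I (\<lambda>_. U))"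
        using KI[OF that] unfolding A_def space_PiM PiE_def Pi_def subset_eq by (auto simp del: split_paired_All split_paired_Ex)
      ultimately show ?thesis by blast
    qed
    have "P.prob (\<Inter>k\<in>J. A k) = (\<Prod>k\<in>J. P.prob (A k))"
      using ind Ain False unfolding P.indep_vars_def
      by (intro P.indep_setsD[of _ J]) (auto simp: J_def fS finL)
    moreover have "P.prob (A k) = 1 - measure U G ^ d" if "k \<in> J" for k
    proof -
      have fK: "finite (K k)" using KI[OF that] finI finite_subset by blast
      have cK: "card (K k) = d" using that Ssub unfolding K_def J_def by (auto simp: card_cartesian_product)
      have "A k = space (PiM I (\<lambda>_. U)) - {\<omega> \<in> space (PiM I (\<lambda>_. U)). \<forall>x\<in>K k. \<omega> x \<in> G}"
        unfolding A_def by auto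
      moreover have "emeasure (PiM I (\<lambda>_. U)) {\<omega> \<in> space (PiM I (\<lambda>_. U)). \<forall>x\<in>K k. \<omega> x \<in> G} = (\<Prod>x\<in>K k. emeasure U G)"
        using emeasure_PiM_Collect[OF KI[OF that] fK, of "\<lambda>_. G"] G by simp
      then have "ennreal (P.prob {\<omega> \<in> space (PiM I (\<lambda>_. U)). \<forall>x\<in>K k. \<omega> x \<in> G}) = ennreal (measure U G) ^ d"
        using cK by (simp add: P.emeasure_eq_measure M.emeasure_eq_measure prod_ennreal)
      then have "ennreal (P.prob {\<omega> \<in> space (PiM I (\<lambda>_. U)). \<forall>x\<in>K k. \<omega> x \<in> G}) = ennreal (measure U G ^ d)"
        by (simp add: ennreal_power)
      then have "P.prob {\<omega> \<in> space (PiM I (\<lambda>_. U)). \<forall>x\<in>K k. \<omega> x \<in> G} = measure U G ^ d"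
        by (subst (asm) ennreal_inj) auto
      moreover have "{\<omega> \<in> space (PiM I (\<lambda>_. U)). \<forall>x\<in>K k. \<omega> x \<in> G} \<in> P.events"
      proof (rule sets.sets_Collect_finite_All[OF _ fK])
        fix x assume "x \<in> K k"
        then have "x \<in> I" using KI[OF that] by auto
        moreover have "{y \<in> space U. y \<in> G} \<in> sets U" using G by (simp add: Collect_conj_eq Int_commute sets.Int_space_eq2)
        ultimately show "{\<omega> \<in> space (PiM I (\<lambda>_. U)). \<omega> x \<in> G} \<in> P.events"
          by (rule sets_Collect_single')
      qed
      ultimately show ?thesis
        by (simp add: P.prob_compl)
    qed
    moreover have "(\<Inter>k\<in>J. A k) = {u \<in> space (PiM I (\<lambda>_. U)). \<forall>i\<in>Lset. \<forall>S\<in>SS. \<exists>j\<in>S. u (i,j) \<notin> G}"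
      using False unfolding A_def J_def K_def by auto
    ultimately show ?thesis
      unfolding I_def[symmetric] using cardJ by simp
  qed
qed



lemma chunks:
  fixes B :: "nat set"
  assumes "finite B" "d \<ge> 1"
  shows "\<exists>SS. finite SS \<and> (\<forall>S\<in>SS. S \<subseteq> B \<and> card S = d) \<and>
     (\<forall>S\<in>SS. \<forall>S'\<in>SS. S \<noteq> S' \<longrightarrow> S \<inter> S' = {}) \<and> card SS = card B div d"
  using assms(1)
proof (induction "card B" arbitrary: B rule: less_induct)
  case less
  show ?case
  proof (cases "card B < d")
    case True
    then show ?thesis by (intro exI[of _ "{}"]) auto
  next
    case False
    then have "d \<le> card B" by simp
    then obtain S where S: "S \<subseteq> B" "card S = d" and finS: "finite S" by (rule obtain_subset_with_card_n)
    have cBS: "card (B - S) = card B - d" using S less.prems by (simp add: card_Diff_subset finS)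
    have "card (B - S) < card B" using cBS assms(2) False by simp
    then obtain SS where SS: "finite SS" "\<forall>T\<in>SS. T \<subseteq> B - S \<and> card T = d"
      "\<forall>T\<in>SS. \<forall>T'\<in>SS. T \<noteq> T' \<longrightarrow> T \<inter> T' = {}" "card SS = card (B - S) div d"
      using less.hyps[of "B - S", OF _ finite_Diff[OF less.prems]] by metis
    have Sne: "S \<noteq> {}" using S assms(2) by auto
    have notin: "S \<notin> SS"
    proof
      assume "S \<in> SS"
      then have "S \<subseteq> B - S" using SS(2) by auto
      then show False using Sne by auto
    qed
    have "card (insert S SS) = card B div d"
    proof -
      have "card (insert S SS) = Suc (card SS)" using SS(1) notin by simp
      also have "\<dots> = Suc ((card B - d) div d)" using SS(4) cBS by simp
      also have "\<dots> = card B div d"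
      proof -
        have "card B = d + (card B - d)" using False by simp
        then have "card B div d = (d + (card B - d)) div d" by simp
        also have "\<dots> = (card B - d) div d + 1" using assms(2) by (simp add: div_add_self1)
        finally show ?thesis by simp
      qed
      finally show ?thesis .
    qed
    moreover have "\<forall>T\<in>insert S SS. T \<subseteq> B \<and> card T = d" using S SS(2) by auto
    moreover have "\<forall>T\<in>insert S SS. \<forall>T'\<in>insert S SS. T \<noteq> T' \<longrightarrow> T \<inter> T' = {}"
    proof (intro ballI impI)
      fix T T' assume T: "T \<in> insert S SS" and T': "T' \<in> insert S SS" and ne: "T \<noteq> T'"
      show "T \<inter> T' = {}"
      proof (cases "T = S")
        case True
        then have "T' \<in> SS" using T' ne by auto
        then show ?thesis using True SS(2) by auto
      next
        case False
        then have "T \<in> SS" using T by auto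
        show ?thesis
        proof (cases "T' = S")
          case True then show ?thesis using \<open>T \<in> SS\<close> SS(2) by auto
        next
          case False then have "T' \<in> SS" using T' by auto
          then show ?thesis using \<open>T \<in> SS\<close> SS(3) ne by auto
        qed
      qed
    qed
    ultimately show ?thesis using SS(1) by (intro exI[of _ "insert S SS"]) auto
  qed
qed



lemma comb_ineq:
  fixes l X n r W d :: real
  assumes "d = r + 1" "r \<ge> 1" "0 \<le> W" "0 \<le> l" "l \<le> n" "X \<ge> r*n + W - r*l" "d*l \<ge> W"
  shows "l * X \<ge> W * n / (2*d)"
proof (cases "2*l \<ge> n")
  case True
  have "X \<ge> W" using assms(2,5,6) by (smt (verit) mult_left_mono)
  then have "l * X \<ge> l * W" using assms(4) by (simp add: mult_left_mono)
  moreover have "l * W \<ge> n * W / 2"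
  proof -
    have "n * W \<le> (2*l) * W" using True assms(3) by (rule mult_right_mono)
    then show ?thesis by simp
  qed
  moreover have "n * W / 2 \<ge> W * n / (2*d)"
  proof -
    have "0 \<le> n * W" using assms(3,4,5) by simp
    moreover have "0 \<le> W * (n * r)" using \<open>0 \<le> n * W\<close> assms(2)
      by (metis mult.assoc mult.commute mult_nonneg_nonneg order_trans zero_le_one)
    ultimately show ?thesis using assms(1,2) by (simp add: field_simps)
  qed
  ultimately show ?thesis by linarith
next
  case False
  have "1 * (n - l) \<le> r * (n - l)" using assms(2,5) by (intro mult_right_mono) auto
  then have "r * (n - l) \<ge> n - l" by simp
  moreover have "r*n + W - r*l = r*(n-l) + W" by (simp add: algebra_simps)
  ultimately have X: "X \<ge> n / 2" using assms(3,6) False by linarith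
  have "d > 0" using assms(1,2) by simp
  then have l: "l \<ge> W / d" using assms(7) by (simp add: pos_divide_le_eq mult.commute)
  have "l * X \<ge> (W / d) * (n / 2)"
    by (rule mult_mono[OF l X]) (use assms False in auto)
  then show ?thesis by (simp add: field_simps)
qed

lemma card_sum_bundles:
  fixes a :: "nat \<Rightarrow> nat"
  assumes "\<forall>j<m. a j < n"
  shows "(\<Sum>i<n. card {j. j < m \<and> a j = i}) = m"
proof -
  have "(\<Sum>i<n. card {j. j < m \<and> a j = i}) = card (\<Union>i<n. {j. j < m \<and> a j = i})"
    by (rule card_UN_disjoint[symmetric]) auto
  also have "(\<Union>i<n. {j. j < m \<and> a j = i}) = {..<m}" using assms by auto
  finally show ?thesis by simp
qed

lemma pred_coord:
  fixes U :: "real measure"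
  assumes "x \<in> I" "G \<in> sets U"
  shows "{u \<in> space (PiM I (\<lambda>_. U)). u x \<notin> G} \<in> sets (PiM I (\<lambda>_. U))"
proof (rule sets_Collect_single'[OF assms(1)])
  have "{y \<in> space U. y \<notin> G} = space U - G" by auto
  then show "{y \<in> space U. y \<notin> G} \<in> sets U" using assms(2) by auto
qed



lemma alloc_bound:
  fixes U :: "real measure" and n m r :: nat and W :: real and a :: "nat \<Rightarrow> nat"
  assumes U: "prob_space U" and sU: "sets U = sets borel" and U01: "measure U {0..1} = 1"
    and r: "r \<ge> 1" and W: "W \<ge> 0"
    and m1: "real (r*n) + W \<le> real m" and m2: "real m \<le> real ((r+1)*n) - W"
  shows "measure (util_space U n m) {u \<in> space (util_space U n m). envy_free n m u a}
     \<le> exp (- (measure U {x. 1 - 1/real (r+1) < x} ^ (r+1)) * (W * real n) / (4 * real (r+1)^2))"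
proof -
  define d where "d = r + 1"
  define I where "I = {..<n} \<times> {..<m}"
  define P where "P = PiM I (\<lambda>_. U)"
  have P_eq: "util_space U n m = P" unfolding util_space_def P_def I_def ..
  interpret P: prob_space P unfolding P_def by (rule prob_space_PiM) (simp add: U)
  define G where "G = {x::real. 1 - 1/real d < x}"
  have G: "G \<in> sets U" unfolding sU G_def by simp
  define \<beta> where "\<beta> = measure U G ^ d"
  have b0: "0 \<le> \<beta>" unfolding \<beta>_def by simp
  have b1: "\<beta> \<le> 1" unfolding \<beta>_def using prob_space.prob_le_1[OF U] by (simp add: power_le_one)
  define E where "E = {u \<in> space P. envy_free n m u a}"
  show ?thesis
  proof (cases "\<forall>j<m. a j < n")
    case False
    then have "E = {}" unfolding E_def envy_free_def by auto
    then show ?thesis unfolding P_eq E_def[symmetric] by simp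
  next
    case valid: True
    define Mb where "Mb i = {j. j < m \<and> a j = i}" for i
    define k where "k i = card (Mb i)" for i
    define Lset where "Lset = {i. i < n \<and> k i \<le> r}"
    define Hset where "Hset = {..<n} - Lset"
    have finMb: "finite (Mb i)" for i unfolding Mb_def by simp
    have "\<forall>h. \<exists>SS. finite SS \<and> (\<forall>S\<in>SS. S \<subseteq> Mb h \<and> card S = d) \<and>
     (\<forall>S\<in>SS. \<forall>S'\<in>SS. S \<noteq> S' \<longrightarrow> S \<inter> S' = {}) \<and> card SS = card (Mb h) div d"
      using chunks[OF finMb] unfolding d_def by auto
    then obtain F where F: "\<And>h. finite (F h)" "\<And>h S. S \<in> F h \<Longrightarrow> S \<subseteq> Mb h \<and> card S = d"
      "\<And>h S S'. S \<in> F h \<Longrightarrow> S' \<in> F h \<Longrightarrow> S \<noteq> S' \<Longrightarrow> S \<inter> S' = {}" "\<And>h. card (F h) = k h div d"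
      unfolding k_def by metis
    define SS where "SS = (\<Union>h\<in>Hset. F h)"
    have finH: "finite Hset" unfolding Hset_def by simp
    have finL: "finite Lset" unfolding Lset_def by simp
    have Mb_disj: "Mb h \<inter> Mb h' = {}" if "h \<noteq> h'" for h h' using that unfolding Mb_def by auto
    have Sne: "S \<noteq> {}" if "S \<in> F h" for S h using F(2)[OF that] unfolding d_def by auto
    have finSS: "finite SS" unfolding SS_def using finH F(1) by simp
    have SSsub: "S \<subseteq> {..<m} \<and> card S = d" if "S \<in> SS" for S
      using that F(2) unfolding SS_def Mb_def by fastforce
    have SSdisj: "S \<inter> S' = {}" if S1: "S \<in> SS" and S2: "S' \<in> SS" and S3: "S \<noteq> S'" for S S'
    proof -
      obtain h where h: "h \<in> Hset" "S \<in> F h" using S1 unfolding SS_def by auto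
      obtain h' where h': "h' \<in> Hset" "S' \<in> F h'" using S2 unfolding SS_def by auto
      show ?thesis
      proof (cases "h = h'")
        case True then show ?thesis using F(3) h h' S3 by auto
      next
        case False
        then show ?thesis using Mb_disj[OF False] F(2)[OF h(2)] F(2)[OF h'(2)] by auto
      qed
    qed
    have cardSS: "card SS = (\<Sum>h\<in>Hset. k h div d)"
    proof -
      have "card SS = (\<Sum>h\<in>Hset. card (F h))" unfolding SS_def
      proof (rule card_UN_disjoint[OF finH])
        show "\<forall>h\<in>Hset. finite (F h)" using F(1) by auto
        show "\<forall>h\<in>Hset. \<forall>h'\<in>Hset. h \<noteq> h' \<longrightarrow> F h \<inter> F h' = {}"
        proof (intro ballI impI)
          fix h h' assume "h \<in> Hset" "h' \<in> Hset" "h \<noteq> h'"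
          show "F h \<inter> F h' = {}"
          proof (rule ccontr)
            assume "F h \<inter> F h' \<noteq> {}"
            then obtain S where "S \<in> F h" "S \<in> F h'" by auto
            then have "S \<subseteq> Mb h \<inter> Mb h'" using F(2) by auto
            then show False using Mb_disj[OF \<open>h \<noteq> h'\<close>] Sne[OF \<open>S \<in> F h\<close>] by auto
          qed
        qed
      qed
      then show ?thesis using F(4) by simp
    qed
    define l where "l = card Lset"
    define T where "T = card SS"
    define X where "X = (\<Sum>h\<in>Hset. k h)"
    have sumk: "(\<Sum>i<n. k i) = m" unfolding k_def Mb_def using card_sum_bundles[OF valid] .
    have split: "(\<Sum>i<n. k i) = (\<Sum>i\<in>Hset. k i) + (\<Sum>i\<in>Lset. k i)"
      unfolding Hset_def by (rule sum.subset_diff) (auto simp: Lset_def)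
    have sumL: "(\<Sum>i\<in>Lset. k i) \<le> r * l"
      unfolding l_def using sum_bounded_above[of Lset k r] by (auto simp: Lset_def mult.commute)
    have cardH: "card Hset = n - l" unfolding Hset_def l_def
      by (subst card_Diff_subset) (auto simp: Lset_def)
    have lle: "l \<le> n" unfolding l_def Lset_def using card_mono[of "{..<n}" Lset] by (auto simp: Lset_def subset_eq)
    have Hk: "k h \<ge> d" if "h \<in> Hset" for h using that unfolding Hset_def Lset_def d_def by auto
    have sumH: "d * (n - l) \<le> X"
      unfolding X_def using sum_bounded_below[of Hset d k] Hk cardH by (auto simp: mult.commute)
    have Xm: "X + (\<Sum>i\<in>Lset. k i) = m" using sumk split unfolding X_def by simp
    have TX: "real X \<le> 2 * real d * real T"
    proof -
      have "k h \<le> 2 * d * (k h div d)" if "h \<in> Hset" for h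
      proof -
        have dpos: "d > 0" unfolding d_def by simp
        have q: "k h div d \<ge> 1" using Hk[OF that] dpos by (simp add: Suc_le_eq div_greater_zero_iff)
        have e1: "k h = d * (k h div d) + k h mod d" by simp
        have e2: "k h mod d < d" using dpos by simp
        have e3: "d \<le> d * (k h div d)" using q by simp
        have e4: "2 * d * (k h div d) = 2 * (d * (k h div d))" by simp
        show ?thesis using e1 e2 e3 e4 by linarith
      qed
      then have "X \<le> (\<Sum>h\<in>Hset. 2 * d * (k h div d))" unfolding X_def by (rule sum_mono)
      also have "\<dots> = 2 * d * T" unfolding T_def cardSS by (simp add: sum_distrib_left)
      finally have "real X \<le> real (2 * d * T)" by (simp only: of_nat_le_iff)
      then show ?thesis by simp
    qed
    have lT: "real l * real T \<ge> W * real n / (4 * real d ^ 2)"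
    proof -
      have dl: "real d * real l \<ge> W"
      proof -
        have "real (d * (n - l)) \<le> real m" using sumH Xm by linarith
        then have "real d * (real n - real l) \<le> real m" using lle by (simp add: of_nat_diff)
        then show ?thesis using m2 unfolding d_def by (simp add: algebra_simps)
      qed
      have Xge: "real X \<ge> real r * real n + W - real r * real l"
        using Xm sumL m1 by (smt (verit) of_nat_add of_nat_mult of_nat_mono)
      have "real l * real X \<ge> W * real n / (2 * real d)"
        by (rule comb_ineq[of _ "real r"]) (use dl Xge W lle r in \<open>auto simp: d_def\<close>)
      moreover have "real l * real X \<le> real l * (2 * real d * real T)"
        using TX by (simp add: mult_left_mono)
      ultimately have "W * real n / (2 * real d) \<le> 2 * real d * (real l * real T)" by (simp add: algebra_simps)
      moreover have dpos: "real d > 0" unfolding d_def by simp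
      ultimately have "W * real n \<le> (2 * real d * (real l * real T)) * (2 * real d)"
        by (simp add: pos_divide_le_eq)
      then have "W * real n \<le> (real l * real T) * (4 * real d ^ 2)"
        by (simp add: power2_eq_square algebra_simps)
      then show ?thesis using dpos by (simp add: pos_divide_le_eq)
    qed
    have Lsub: "Lset \<subseteq> {..<n}" unfolding Lset_def by auto
    have d1: "d \<ge> 1" unfolding d_def by simp
    define Bad where "Bad = {u \<in> space P. \<forall>i\<in>Lset. \<forall>S\<in>SS. \<exists>j\<in>S. u (i,j) \<notin> G}"
    have mBad: "measure P Bad = (1 - \<beta>)^(l*T)"
      unfolding Bad_def P_def I_def \<beta>_def l_def T_def
      by (rule prob_core[OF U G d1 Lsub finSS SSsub SSdisj]) auto
    have finI: "finite I" unfolding I_def by simp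
    have Bad_sets: "Bad \<in> sets P"
      unfolding Bad_def
    proof (rule sets.sets_Collect_finite_All[OF _ finL])
      fix i assume i: "i \<in> Lset"
      show "{u \<in> space P. \<forall>S\<in>SS. \<exists>j\<in>S. u (i,j) \<notin> G} \<in> sets P"
      proof (rule sets.sets_Collect_finite_All[OF _ finSS])
        fix S assume S: "S \<in> SS"
        have finS: "finite S" using SSsub[OF S] finite_subset by blast
        show "{u \<in> space P. \<exists>j\<in>S. u (i,j) \<notin> G} \<in> sets P"
        proof (rule sets.sets_Collect_finite_Ex[OF _ finS])
          fix j assume j: "j \<in> S"
          have "(i,j) \<in> I" using i j SSsub[OF S] Lsub unfolding I_def by auto
          then show "{u \<in> space P. u (i,j) \<notin> G} \<in> sets P"
            unfolding P_def by (rule pred_coord[OF _ G])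
        qed
      qed
    qed
    interpret PP: product_prob_space "\<lambda>_. U" I
      by (simp add: product_prob_space_def product_prob_space_axioms_def product_sigma_finite_def U prob_space_imp_sigma_finite)
    have AE01: "AE u in P. \<forall>x\<in>I. u x \<in> {0..1}"
    proof (rule AE_finite_allI[OF finI])
      fix x assume "x \<in> I"
      have "AE y in U. y \<in> {0..1}" by (rule prob_space.AE_prob_1[OF U U01])
      then show "AE u in P. u x \<in> {0..1}" unfolding P_def by (rule PP.AE_component[OF \<open>x \<in> I\<close>])
    qed
    have AEimp: "AE u in P. u \<in> E \<longrightarrow> u \<in> Bad"
      using AE01
    proof eventually_elim
      case (elim u)
      show ?case
      proof
        assume uE: "u \<in> E"
        then have us: "u \<in> space P" and ef: "envy_free n m u a" unfolding E_def by auto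
        have "\<forall>i\<in>Lset. \<forall>S\<in>SS. \<exists>j\<in>S. u (i,j) \<notin> G"
        proof (intro ballI, rule ccontr)
          fix i S assume i: "i \<in> Lset" and S: "S \<in> SS" and nex: "\<not> (\<exists>j\<in>S. u (i, j) \<notin> G)"
          obtain h where h: "h \<in> Hset" "S \<in> F h" using S unfolding SS_def by auto
          have hn: "h < n" using h unfolding Hset_def by auto
          have iN: "i < n" using i Lsub by auto
          have SMb: "S \<subseteq> Mb h" and cS: "card S = d" using F(2)[OF h(2)] by auto
          have finS: "finite S" using SMb finMb finite_subset by blast
          have Sne': "S \<noteq> {}" using Sne[OF h(2)] .
          have EF: "(\<Sum>j\<in>Mb h. u (i,j)) \<le> (\<Sum>j\<in>Mb i. u (i,j))"
            using ef iN hn unfolding envy_free_def Mb_def by blast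
          have u01: "u (i,j) \<in> {0..1}" if "j < m" for j
            using elim iN that unfolding I_def by auto
          have "(\<Sum>j\<in>Mb i. u (i,j)) \<le> real (card (Mb i)) * 1"
            by (rule sum_bounded_above) (use u01 in \<open>auto simp: Mb_def\<close>)
          also have "\<dots> \<le> real r" using i unfolding Lset_def k_def by simp
          finally have up: "(\<Sum>j\<in>Mb i. u (i,j)) \<le> real r" .
          have "(\<Sum>j\<in>S. u (i,j)) \<le> (\<Sum>j\<in>Mb h. u (i,j))"
            by (rule sum_mono2[OF finMb SMb]) (use u01 in \<open>auto simp: Mb_def\<close>)
          moreover have "(\<Sum>j\<in>S. (1 - 1/real d)) < (\<Sum>j\<in>S. u (i,j))"
            by (rule sum_strict_mono[OF finS Sne']) (use nex in \<open>auto simp: G_def\<close>)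
          moreover have "(\<Sum>j\<in>S. (1 - 1/real d)) = real r"
            using cS d1 unfolding d_def by (simp add: field_simps)
          ultimately show False using EF up by linarith
        qed
        then show "u \<in> Bad" unfolding Bad_def using us by auto
      qed
    qed
    have "measure P E \<le> measure P Bad" by (rule P.finite_measure_mono_AE[OF AEimp Bad_sets])
    also have "\<dots> = (1 - \<beta>)^(l*T)" by (rule mBad)
    also have "\<dots> \<le> exp (- \<beta>) ^ (l*T)"
      by (rule power_mono) (use b1 in \<open>auto simp: exp_ge_add_one_self[of "-\<beta>", simplified]\<close>)
    also have "\<dots> = exp (- \<beta> * (real l * real T))" by (simp add: exp_of_nat_mult[symmetric] algebra_simps)
    also have "\<dots> \<le> exp (- \<beta> * (W * real n / (4 * real d ^ 2)))"
      using mult_left_mono[OF lT b0] by simp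
    finally have fin: "measure P E \<le> exp (- \<beta> * (W * real n / (4 * real d ^ 2)))" .
    have eq: "- (measure U {x. 1 - 1/real (r+1) < x} ^ (r+1)) * (W * real n) / (4 * real (r+1)^2)
       = - \<beta> * (W * real n / (4 * real d ^ 2))"
      unfolding \<beta>_def G_def d_def by simp
    show ?thesis unfolding P_eq E_def[symmetric] eq by (rule fin)
  qed
qed



lemma ef_restrict: "envy_free n m u (restrict a {..<m}) = envy_free n m u a"
proof -
  have "\<And>i. {j. j < m \<and> restrict a {..<m} j = i} = {j. j < m \<and> a j = i}" by auto
  then show ?thesis unfolding envy_free_def by simp
qed

lemma ef_sets:
  fixes U :: "real measure"
  assumes sU: "sets U = sets borel"
  shows "{u \<in> space (util_space U n m). envy_free n m u a} \<in> sets (util_space U n m)"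
proof (cases "\<forall>j<m. a j < n")
  case False
  then have "{u \<in> space (util_space U n m). envy_free n m u a} = {}" unfolding envy_free_def by auto
  then show ?thesis by (metis sets.empty_sets)
next
  case True
  define P where "P = util_space U n m"
  have coord: "(\<lambda>u. u (i,j)) \<in> borel_measurable P" if "i < n" "j < m" for i j
  proof -
    have "(\<lambda>u. u (i,j)) \<in> measurable P U" unfolding P_def util_space_def
      by (rule measurable_component_singleton) (use that in auto)
    then show ?thesis using measurable_cong_sets[OF refl sU] by blast
  qed
  have sumM: "(\<lambda>u. \<Sum>j\<in>{j. j < m \<and> a j = i'}. u (i,j)) \<in> borel_measurable P" if "i < n" for i i'
    by (rule borel_measurable_sum) (use coord that in auto)
  have eq: "{u \<in> space P. envy_free n m u a} = {u \<in> space P. \<forall>i\<in>{..<n}. \<forall>i'\<in>{..<n}.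
      (\<Sum>j\<in>{j. j < m \<and> a j = i'}. u (i, j)) \<le> (\<Sum>j\<in>{j. j < m \<and> a j = i}. u (i, j))}"
    using True unfolding envy_free_def by auto
  have "{u \<in> space P. \<forall>i\<in>{..<n}. \<forall>i'\<in>{..<n}.
      (\<Sum>j\<in>{j. j < m \<and> a j = i'}. u (i, j)) \<le> (\<Sum>j\<in>{j. j < m \<and> a j = i}. u (i, j))} \<in> sets P"
  proof (rule sets.sets_Collect_finite_All[OF _ finite_lessThan])
    fix i assume i: "i \<in> {..<n}"
    show "{u \<in> space P. \<forall>i'\<in>{..<n}.
      (\<Sum>j\<in>{j. j < m \<and> a j = i'}. u (i, j)) \<le> (\<Sum>j\<in>{j. j < m \<and> a j = i}. u (i, j))} \<in> sets P"
    proof (rule sets.sets_Collect_finite_All[OF _ finite_lessThan])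
      fix i' assume "i' \<in> {..<n}"
      show "{u \<in> space P. (\<Sum>j\<in>{j. j < m \<and> a j = i'}. u (i, j)) \<le> (\<Sum>j\<in>{j. j < m \<and> a j = i}. u (i, j))} \<in> sets P"
        by (rule borel_measurable_le) (use sumM i in auto)
    qed
  qed
  then show ?thesis using eq unfolding P_def by simp
qed

lemma noEF_bound:
  fixes U :: "real measure" and n m :: nat and B :: real
  assumes U: "prob_space U" and sU: "sets U = sets borel"
    and bnd: "\<And>a. measure (util_space U n m) {u \<in> space (util_space U n m). envy_free n m u a} \<le> B"
  shows "measure (util_space U n m) {u \<in> space (util_space U n m). \<not> (\<exists>a. envy_free n m u a)}
     \<ge> 1 - real n ^ m * B"
proof -
  define P where "P = util_space U n m"
  interpret P: prob_space P unfolding P_def util_space_def by (rule prob_space_PiM) (simp add: U)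
  define A where "A = PiE {..<m} (\<lambda>_. {..<n::nat})"
  have finA: "finite A" unfolding A_def by (simp add: finite_PiE)
  have cardA: "card A = n ^ m" unfolding A_def by (simp add: card_PiE)
  define EFa where "EFa a = {u \<in> space P. envy_free n m u a}" for a
  have EFs: "EFa a \<in> sets P" for a unfolding EFa_def P_def by (rule ef_sets[OF sU])
  have eq: "{u \<in> space P. \<not> (\<exists>a. envy_free n m u a)} = space P - (\<Union>a\<in>A. EFa a)"
  proof -
    have "(\<exists>a. envy_free n m u a) \<longleftrightarrow> (\<exists>a\<in>A. envy_free n m u a)" for u
    proof
      assume "\<exists>a. envy_free n m u a"
      then obtain a where a: "envy_free n m u a" by auto
      then have "restrict a {..<m} \<in> A" unfolding A_def envy_free_def by auto
      moreover have "envy_free n m u (restrict a {..<m})" using a ef_restrict by simp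
      ultimately show "\<exists>a\<in>A. envy_free n m u a" by blast
    qed auto
    then show ?thesis unfolding EFa_def by auto
  qed
  have "P.prob (\<Union>a\<in>A. EFa a) \<le> (\<Sum>a\<in>A. P.prob (EFa a))"
    by (rule P.finite_measure_subadditive_finite[OF finA]) (use EFs in auto)
  also have "\<dots> \<le> (\<Sum>a\<in>A. B)" by (rule sum_mono) (use bnd in \<open>simp add: EFa_def P_def\<close>)
  also have "\<dots> = real n ^ m * B" using cardA by simp
  finally have "P.prob (\<Union>a\<in>A. EFa a) \<le> real n ^ m * B" .
  moreover have "P.prob (space P - (\<Union>a\<in>A. EFa a)) = 1 - P.prob (\<Union>a\<in>A. EFa a)"
    by (rule P.prob_compl) (use EFs finA in auto)
  ultimately show ?thesis using eq unfolding P_def by simp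
qed



lemma beta_bound:
  fixes \<theta> q \<epsilon> c x :: real and d :: nat
  assumes th: "\<theta> > 0" and q: "q \<ge> 1" and e: "\<epsilon> > 0"
    and c: "c = min (1/2) (\<epsilon>/(8*q))"
    and d1: "1 \<le> d" and dle: "d \<le> 2*c*ln x / ln (ln x)"
    and LL1: "ln (ln x) \<ge> 1" and LL2: "ln (ln x) \<ge> 8*c*\<bar>ln \<theta>\<bar>/\<epsilon>" and x: "x > 1"
  shows "d \<le> ln x" and "(\<theta> * (1/real d) powr q) ^ d \<ge> x powr (-\<epsilon>/2)"
proof -
  define L where "L = ln x"
  define LL where "LL = ln L"
  have Lpos: "L > 0" unfolding L_def using x by simp
  have LLpos: "LL \<ge> 1" unfolding LL_def L_def using LL1 .
  have c0: "c > 0" using c e q by simp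
  have c2: "2*c \<le> 1" using c by simp
  have cq: "2*c*q \<le> \<epsilon>/4"
  proof -
    have "c \<le> \<epsilon>/(8*q)" using c by simp
    then have "c*q \<le> \<epsilon>/(8*q)*q" by (rule mult_right_mono) (use q in auto)
    also have "\<epsilon>/(8*q)*q = \<epsilon>/8" using q by (simp add: field_simps)
    finally show ?thesis by simp
  qed
  have dle': "d \<le> 2*c*L/LL" using dle unfolding L_def LL_def .
  have "2*c*L/LL \<le> L"
  proof -
    have "2*c*L \<le> 1 * L" using c2 Lpos by (intro mult_right_mono) auto
    also have "\<dots> \<le> LL * L" using LLpos Lpos by (intro mult_right_mono) auto
    finally show ?thesis using LLpos by (simp add: divide_le_eq mult.commute)
  qed
  then have dL: "d \<le> L" using dle' by linarith
  then show "d \<le> ln x" unfolding L_def .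
  have lnd: "ln d \<le> LL" unfolding LL_def using dL d1 by simp
  have lnd0: "ln d \<ge> 0" using d1 by simp
  have t1: "d * (q * ln d) \<le> (\<epsilon>/4) * L"
  proof -
    have "d * (q * ln d) \<le> (2*c*L/LL) * (q * LL)"
      by (rule mult_mono) (use dle' lnd lnd0 q d1 in \<open>auto intro: mult_left_mono\<close>)
    also have "\<dots> = 2*c*q*L" using LLpos by (simp add: field_simps)
    also have "\<dots> \<le> (\<epsilon>/4) * L" using cq Lpos by (intro mult_right_mono) auto
    finally show ?thesis .
  qed
  have t2: "d * \<bar>ln \<theta>\<bar> \<le> (\<epsilon>/4) * L"
  proof -
    have "d * \<bar>ln \<theta>\<bar> \<le> (2*c*L/LL) * \<bar>ln \<theta>\<bar>" using dle' by (intro mult_right_mono) auto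
    also have "\<dots> = L * (2*c*\<bar>ln \<theta>\<bar> / LL)" by (simp add: field_simps)
    also have "\<dots> \<le> L * (\<epsilon>/4)"
    proof (rule mult_left_mono)
      have "8*c*\<bar>ln \<theta>\<bar>/\<epsilon> \<le> LL" using LL2 unfolding LL_def L_def .
      then have "8*c*\<bar>ln \<theta>\<bar> \<le> LL * \<epsilon>" using e by (simp add: divide_le_eq)
      then show "2*c*\<bar>ln \<theta>\<bar> / LL \<le> \<epsilon>/4" using LLpos by (simp add: divide_le_eq field_simps)
    qed (use Lpos in auto)
    finally show ?thesis by (simp add: mult.commute)
  qed
  have key: "d * (ln \<theta> - q * ln d) \<ge> -(\<epsilon>/2) * L"
  proof -
    have "d * ln \<theta> \<ge> - (d * \<bar>ln \<theta>\<bar>)" using d1 by (simp add: abs_if mult_left_mono_neg)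
    then show ?thesis using t1 t2 by (simp add: right_diff_distrib)
  qed
  have "(\<theta> * (1/d) powr q) = exp (ln \<theta> - q * ln d)"
    using th d1 by (simp add: powr_def exp_diff ln_div exp_minus divide_inverse ln_inverse)
  then have "(\<theta> * (1/real d) powr q) ^ d = exp (d * (ln \<theta> - q * ln d))"
    by (simp add: exp_of_nat_mult[symmetric])
  moreover have "x powr (-\<epsilon>/2) = exp (-(\<epsilon>/2) * L)" using x unfolding L_def by (simp add: powr_def)
  ultimately show "(\<theta> * (1/real d) powr q) ^ d \<ge> x powr (-\<epsilon>/2)" using key by simp
qed

lemma asym_g:
  fixes \<epsilon> :: real assumes "\<epsilon> > 0"
  shows "(\<lambda>n::nat. exp (real n * ln (real n)^2 - real n powr (1+\<epsilon>/2) / (4 * ln (real n)^2))) \<longlonglongrightarrow> 0"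
  using assms by real_asymp

lemma asym_ll: "filterlim (\<lambda>n::nat. ln (ln (real n))) at_top sequentially"
  by real_asymp



theorem theorem2:
  fixes \<theta> \<epsilon> q :: real
  assumes "\<theta> > 0" and "0 < \<epsilon>" and "\<epsilon> < 1" and "q \<ge> 1"
  shows "\<exists>c>0. \<forall>(U::real measure) (r::nat \<Rightarrow> nat) (m::nat \<Rightarrow> nat).
     prob_space U \<and> sets U = sets borel \<and> measure U {0..1} = 1 \<and>
     poly_bounded_below_at_1 \<theta> q U \<and>
     (\<forall>\<^sub>F n in sequentially.
        1 \<le> r n \<and> real (r n) \<le> c * ln (real n) / ln (ln (real n)) \<and>
        real (r n * n) + real n powr \<epsilon> \<le> real (m n) \<and>
        real (m n) \<le> real ((r n + 1) * n) - real n powr \<epsilon>)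
     \<longrightarrow> ((\<lambda>n. measure (util_space U n (m n))
              {u \<in> space (util_space U n (m n)). \<not> (\<exists>a. envy_free n (m n) u a)})
          \<longlongrightarrow> 1) sequentially"
proof -
  note th = assms(1) and e = assms(2) and q = assms(4)
  define c where "c = min (1/2) (\<epsilon>/(8*q))"
  have c0: "c > 0" unfolding c_def using e q by simp
  define g where "g n = exp (real n * ln (real n)^2 - real n powr (1+\<epsilon>/2) / (4 * ln (real n)^2))" for n :: nat
  have g0: "g \<longlonglongrightarrow> 0" unfolding g_def by (rule asym_g[OF e])
  show ?thesis
  proof (intro exI[of _ c] conjI c0 allI impI)
    fix U :: "real measure" and r m :: "nat \<Rightarrow> nat"
    assume H: "prob_space U \<and> sets U = sets borel \<and> measure U {0..1} = 1 \<and>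
     poly_bounded_below_at_1 \<theta> q U \<and>
     (\<forall>\<^sub>F n in sequentially.
        1 \<le> r n \<and> real (r n) \<le> c * ln (real n) / ln (ln (real n)) \<and>
        real (r n * n) + real n powr \<epsilon> \<le> real (m n) \<and>
        real (m n) \<le> real ((r n + 1) * n) - real n powr \<epsilon>)"
    have U: "prob_space U" using H by blast
    have sU: "sets U = sets borel" using H by blast
    have U01: "measure U {0..1} = 1" using H by blast
    have PB: "poly_bounded_below_at_1 \<theta> q U" using H by blast
    have evH: "\<forall>\<^sub>F n in sequentially.
        1 \<le> r n \<and> real (r n) \<le> c * ln (real n) / ln (ln (real n)) \<and>
        real (r n * n) + real n powr \<epsilon> \<le> real (m n) \<and>
        real (m n) \<le> real ((r n + 1) * n) - real n powr \<epsilon>" using H by blast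
    define f where "f n = measure (util_space U n (m n))
              {u \<in> space (util_space U n (m n)). \<not> (\<exists>a. envy_free n (m n) u a)}" for n
    have ev1: "\<forall>\<^sub>F n in sequentially. ln (ln (real n)) \<ge> 1"
      using asym_ll unfolding filterlim_at_top by blast
    have ev2: "\<forall>\<^sub>F n in sequentially. ln (ln (real n)) \<ge> 8*c*\<bar>ln \<theta>\<bar>/\<epsilon>"
      using asym_ll unfolding filterlim_at_top by blast
    have ev3: "\<forall>\<^sub>F n in sequentially. n \<ge> (2::nat)" by (rule eventually_ge_at_top)
    have low: "\<forall>\<^sub>F n in sequentially. 1 - g n \<le> f n"
      using evH ev1 ev2 ev3
    proof eventually_elim
      case (elim n)
      define r' where "r' = r n"
      define m' where "m' = m n"
      define d where "d = r' + 1"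
      define W where "W = real n powr \<epsilon>"
      define p where "p = measure U {x. 1 - 1/real d < x}"
      have r1: "1 \<le> r'" and rle: "real r' \<le> c * ln (real n) / ln (ln (real n))"
        and m1: "real (r' * n) + W \<le> real m'" and m2: "real m' \<le> real ((r' + 1) * n) - W"
        using elim(1) unfolding r'_def m'_def W_def by auto
      have n1: "real n > 1" using elim(4) by simp
      have W0: "W \<ge> 0" unfolding W_def by simp
      have d1: "1 \<le> d" unfolding d_def by simp
      have dle: "real d \<le> 2*c*ln (real n) / ln (ln (real n))"
      proof -
        have "real d \<le> 2 * real r'" unfolding d_def using r1 by simp
        also have "\<dots> \<le> 2 * (c * ln (real n) / ln (ln (real n)))" using rle by simp
        finally show ?thesis by simp
      qed
      have dL: "real d \<le> ln (real n)"
        and bb: "(\<theta> * (1/real d) powr q) ^ d \<ge> real n powr (-\<epsilon>/2)"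
        using beta_bound[OF th q e c_def d1 dle elim(2) elim(3) n1] by auto
      have pge: "\<theta> * (1/real d) powr q \<le> p"
        using PB d1 unfolding poly_bounded_below_at_1_def p_def by auto
      have pd: "p ^ d \<ge> real n powr (-\<epsilon>/2)"
      proof -
        have "(\<theta> * (1/real d) powr q) ^ d \<le> p ^ d" by (rule power_mono[OF pge]) (use th in simp)
        then show ?thesis using bb by linarith
      qed
      define X where "X = p ^ d * (W * real n) / (4 * real d ^ 2)"
      have ab: "measure (util_space U n m') {u \<in> space (util_space U n m'). envy_free n m' u a} \<le> exp (- X)" for a
        using alloc_bound[OF U sU U01 r1 W0 m1 m2, of a] unfolding X_def p_def d_def by simp
      have nb: "f n \<ge> 1 - real n ^ m' * exp (- X)"
        unfolding f_def m'_def[symmetric] by (rule noEF_bound[OF U sU ab])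
      have dpos: "real d > 0" using d1 by simp
      have Xge: "X \<ge> real n powr (1+\<epsilon>/2) / (4 * ln (real n)^2)"
      proof -
        have "real n powr (1+\<epsilon>/2) = real n powr (-\<epsilon>/2) * (W * real n)"
        proof -
          have "real n powr (-\<epsilon>/2) * (W * real n) = real n powr (-\<epsilon>/2) * real n powr \<epsilon> * real n powr 1"
          proof -
            have h: "real n powr 1 = real n" using n1 by simp
            show ?thesis by (simp only: h W_def mult.assoc)
          qed
          also have "\<dots> = real n powr (-\<epsilon>/2 + \<epsilon> + 1)" by (simp only: powr_add)
          also have "-\<epsilon>/2 + \<epsilon> + 1 = 1 + \<epsilon>/2" by simp
          finally show ?thesis by simp
        qed
        also have "\<dots> \<le> p ^ d * (W * real n)" using pd W0 n1 by (intro mult_right_mono) auto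
        finally have A: "real n powr (1+\<epsilon>/2) \<le> p ^ d * (W * real n)" .
        have B: "4 * real d ^ 2 \<le> 4 * ln (real n)^2" using dL dpos by (simp add: power_mono)
        have "real n powr (1+\<epsilon>/2) / (4 * ln (real n)^2) \<le> real n powr (1+\<epsilon>/2) / (4 * real d ^ 2)"
        proof (rule divide_left_mono[OF B])
          have "ln (real n) > 0" using n1 by simp
          then show "0 < 4 * ln (real n)^2 * (4 * real d ^ 2)" using dpos by simp
        qed simp
        also have "\<dots> \<le> X" unfolding X_def by (rule divide_right_mono[OF A]) simp
        finally show ?thesis .
      qed
      have mle: "real m' * ln (real n) \<le> real n * ln (real n)^2"
      proof -
        have "real m' \<le> real d * real n" using m2 W0 unfolding d_def by (simp add: algebra_simps)
        also have "\<dots> \<le> ln (real n) * real n" using dL by (intro mult_right_mono) auto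
        finally have "real m' \<le> ln (real n) * real n" .
        then have "real m' * ln (real n) \<le> (ln (real n) * real n) * ln (real n)"
          using n1 by (intro mult_right_mono) auto
        then show ?thesis by (simp add: power2_eq_square algebra_simps)
      qed
      have "exp (real m' * ln (real n)) = exp (ln (real n)) ^ m'" by (rule exp_of_nat_mult)
      also have "\<dots> = real n ^ m'" using n1 by simp
      finally have "real n ^ m' * exp (- X) = exp (real m' * ln (real n)) * exp (- X)" by simp
      also have "\<dots> = exp (real m' * ln (real n) - X)" by (simp add: exp_diff exp_minus divide_inverse)
      also have "\<dots> \<le> g n" unfolding g_def using mle Xge by simp
      finally show ?case using nb by linarith
    qed
    have up: "\<forall>\<^sub>F n in sequentially. f n \<le> 1"
    proof (rule always_eventually, rule allI)
      fix n
      interpret P: prob_space "util_space U n (m n)"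
        unfolding util_space_def by (rule prob_space_PiM) (simp add: U)
      show "f n \<le> 1" unfolding f_def by (rule P.prob_le_1)
    qed
    have "(\<lambda>n. 1 - g n) \<longlonglongrightarrow> 1 - 0" by (intro tendsto_diff tendsto_const g0)
    then have "(\<lambda>n. 1 - g n) \<longlonglongrightarrow> 1" by simp
    then have "f \<longlonglongrightarrow> 1" using tendsto_sandwich[OF low up] tendsto_const by blast
    then show "((\<lambda>n. measure (util_space U n (m n))
              {u \<in> space (util_space U n (m n)). \<not> (\<exists>a. envy_free n (m n) u a)}) \<longlongrightarrow> 1) sequentially"
      unfolding f_def .
  qed
qed

end
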